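(* Let $n\ge 2$ be an integer. No relative equilibrium of the Newtonian planar $(1+n)$-body problem whose configuration consists of a central mass at the origin and a regular $n$-gon centered at the origin is really perverse.
   Context: The Newtonian planar $N$-body problem (gravitational constant $1$): bodies with masses $\mu_i>0$ at positions $r_i\in\mathbb{C}$ satisfy $\mu_i\ddot r_i=\sum_{j\ne i}\mu_i\mu_j\,\frac{r_j-r_i}{|r_j-r_i|^3}$. A relative equilibrium (angular velocity $1$) is a motion $r_i(t)=r_ie^{it}$ that is a solution. A mass system for this configuration is a pair $(m_0,m_1)$ of positive numbers: mass $m_0$ at the center and mass $m_1$ at every vertex of the $n$-gon; total mass $m_0+nm_1$, center of mass at the origin. The relative equilibrium is really perverse if there exist two distinct mass systems with the same total mass and the same center of mass for each of which $r_i(t)=r_ie^{it}$ is a solution. *)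

theory Defs
  imports "HOL-Analysis.Analysis"
begin

text \<open>The motion r_i(t) = r_i e^{it} is a solution of the
  Newtonian N-body equations (gravitational constant 1) iff for all t and all i,
  mu_i * (second derivative of r_i e^{it}) = sum over j ~= i of
  mu_i mu_j (r_j(t) - r_i(t)) / |r_j(t) - r_i(t)|^3.
  The second derivative of r_i e^{it} is - r_i e^{it}; we require also that no two
  bodies collide.\<close>

definition rel_eq_solution :: "nat \<Rightarrow> (nat \<Rightarrow> real) \<Rightarrow> (nat \<Rightarrow> complex) \<Rightarrow> bool" where
  "rel_eq_solution N mu r \<longleftrightarrow>
     (\<forall>i<N. \<forall>j<N. i \<noteq> j \<longrightarrow> r i \<noteq> r j) \<and>
     (\<forall>t::real. \<forall>i<N.
        complex_of_real (mu i) * (- (r i * exp (\<i> * of_real t))) =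
        (\<Sum>j\<in>{..<N} - {i}.
           complex_of_real (mu i * mu j) *
           (r j * exp (\<i> * of_real t) - r i * exp (\<i> * of_real t)) /
           complex_of_real (cmod (r j * exp (\<i> * of_real t) - r i * exp (\<i> * of_real t)) ^ 3)))"

definition ngon_config :: "nat \<Rightarrow> complex \<Rightarrow> nat \<Rightarrow> complex" where
  "ngon_config n a k = (if k = 0 then 0 else a * cis (2 * pi * real (k - 1) / real n))"

definition mass_sys :: "real \<Rightarrow> real \<Rightarrow> nat \<Rightarrow> real" where
  "mass_sys m0 m1 k = (if k = 0 then m0 else m1)"

definition center_of_mass :: "nat \<Rightarrow> (nat \<Rightarrow> real) \<Rightarrow> (nat \<Rightarrow> complex) \<Rightarrow> complex" where
  "center_of_mass N mu r = (\<Sum>i<N. complex_of_real (mu i) * r i) / complex_of_real (\<Sum>i<N. mu i)"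

definition really_perverse_ngon :: "nat \<Rightarrow> complex \<Rightarrow> bool" where
  "really_perverse_ngon n a \<longleftrightarrow>
     (\<exists>m0 m1 m0' m1'. m0 > 0 \<and> m1 > 0 \<and> m0' > 0 \<and> m1' > 0 \<and>
        (m0, m1) \<noteq> (m0', m1') \<and>
        m0 + real n * m1 = m0' + real n * m1' \<and>
        center_of_mass (n + 1) (mass_sys m0 m1) (ngon_config n a) =
          center_of_mass (n + 1) (mass_sys m0' m1') (ngon_config n a) \<and>
        rel_eq_solution (n + 1) (mass_sys m0 m1) (ngon_config n a) \<and>
        rel_eq_solution (n + 1) (mass_sys m0' m1') (ngon_config n a))"

end

theory Submission
  imports Defs
begin

lemma mono_from0:
  fixes f f' :: "real \<Rightarrow> real"
  assumes "\<And>t. 0 \<le> t \<Longrightarrow> (f has_real_derivative f' t) (at t)"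
      and "\<And>t. 0 \<le> t \<Longrightarrow> f' t \<ge> 0" and "0 \<le> x"
  shows "f 0 \<le> f x"
  by (rule DERIV_nonneg_imp_nondecreasing[OF assms(3)]) (use assms in blast)

lemma cos_lb2: assumes "0 \<le> x" shows "1 - x^2/2 \<le> cos (x::real)"
proof -
  have "(\<lambda>x. cos x - 1 + x^2/2) 0 \<le> (\<lambda>x. cos x - 1 + x^2/2) x"
    by (rule mono_from0[where f'="\<lambda>t. - sin t + t"])
       (auto intro!: derivative_eq_intros sin_x_le_x simp: assms)
  thus ?thesis by simp
qed

lemma sin_lb3: assumes "0 \<le> x" shows "x - x^3/6 \<le> sin (x::real)"
proof -
  have "(\<lambda>x. sin x - x + x^3/6) 0 \<le> (\<lambda>x. sin x - x + x^3/6) x"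
    by (rule mono_from0[where f'="\<lambda>t. cos t - 1 + t^2/2"])
       (auto intro!: derivative_eq_intros simp: assms algebra_simps dest: cos_lb2)
  thus ?thesis by simp
qed

lemma cos_ub4: assumes "0 \<le> x" shows "cos (x::real) \<le> 1 - x^2/2 + x^4/24"
proof -
  have "(\<lambda>x. 1 - x^2/2 + x^4/24 - cos x) 0 \<le> (\<lambda>x. 1 - x^2/2 + x^4/24 - cos x) x"
    by (rule mono_from0[where f'="\<lambda>t. - t + t^3/6 + sin t"])
       (auto intro!: derivative_eq_intros simp: assms algebra_simps dest: sin_lb3)
  thus ?thesis by simp
qed

lemma sin_ub5: assumes "0 \<le> x" shows "sin (x::real) \<le> x - x^3/6 + x^5/120"
proof -
  have "(\<lambda>x. x - x^3/6 + x^5/120 - sin x) 0 \<le> (\<lambda>x. x - x^3/6 + x^5/120 - sin x) x"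
    by (rule mono_from0[where f'="\<lambda>t. 1 - t^2/2 + t^4/24 - cos t"])
       (auto intro!: derivative_eq_intros simp: assms algebra_simps dest: cos_ub4)
  thus ?thesis by simp
qed

lemma cos_lb6: assumes "0 \<le> x" shows "1 - x^2/2 + x^4/24 - x^6/720 \<le> cos (x::real)"
proof -
  have "(\<lambda>x. cos x - (1 - x^2/2 + x^4/24 - x^6/720)) 0 \<le> (\<lambda>x. cos x - (1 - x^2/2 + x^4/24 - x^6/720)) x"
    by (rule mono_from0[where f'="\<lambda>t. - sin t + (t - t^3/6 + t^5/120)"])
       (auto intro!: derivative_eq_intros simp: assms algebra_simps dest: sin_ub5)
  thus ?thesis by simp
qed

definition gg :: "real \<Rightarrow> real" where "gg x = 1 / sin x - 1 / x"
definition GG :: "real \<Rightarrow> real" where "GG x = ln (tan (x/2)) - ln (x/2)"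

lemma poly_key:
  fixes x :: real assumes "0 \<le> x" "x^2 \<le> 2"
  shows "2 * (x - x^3/6 + x^5/120)^3 \<le> x^3 * (1 + (1 - x^2/2 + x^4/24 - x^6/720)^2)"
proof -
  define t where "t = x^2"
  have t0: "0 \<le> t" and t2: "t \<le> 2" using assms by (auto simp: t_def)
  have E: "0 \<le> (7/60 - t/54) + t^2 * (19/14400 - t/21600) + t^4/1296000"
    using t0 t2 by (intro add_nonneg_nonneg mult_nonneg_nonneg) auto
  have "x^3 * (1 + (1 - x^2/2 + x^4/24 - x^6/720)^2) - 2 * (x - x^3/6 + x^5/120)^3
        = x^7 * ((7/60 - t/54) + t^2 * (19/14400 - t/21600) + t^4/1296000)"
    unfolding t_def by (simp add: field_simps eval_nat_numeral)
  moreover have "0 \<le> x^7 * ((7/60 - t/54) + t^2 * (19/14400 - t/21600) + t^4/1296000)"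
    using E assms by simp
  ultimately show ?thesis by linarith
qed

lemma sin_cube_ineq:
  fixes x :: real assumes "0 < x" "x < pi"
  shows "2 * (sin x)^3 \<le> x^3 * (1 + (cos x)^2)"
proof (cases "x \<ge> 13/10")
  case True
  have "sin x \<le> 1" by simp
  moreover have "0 \<le> sin x" using assms by (simp add: sin_ge_zero)
  ultimately have "(sin x)^3 \<le> 1" by (simp add: power_le_one)
  moreover have "(13/10::real)^3 \<le> x^3" using True by (intro power_mono) auto
  moreover have "x^3 \<le> x^3 * (1 + (cos x)^2)" using assms by simp
  moreover have "(13/10::real)^3 = 2197/1000" by (simp add: power3_eq_cube)
  ultimately show ?thesis by linarith
next
  case False
  have x2: "x^2 \<le> 2"
  proof -
    have "x^2 \<le> (13/10)^2" using False assms by (intro power_mono) auto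
    thus ?thesis by (simp add: power2_eq_square)
  qed
  have s0: "0 \<le> sin x" using assms by (simp add: sin_ge_zero)
  have "(sin x)^3 \<le> (x - x^3/6 + x^5/120)^3"
    using s0 sin_ub5[of x] assms by (intro power_mono) auto
  moreover have p0: "0 \<le> 1 - x^2/2 + x^4/24 - x^6/720"
  proof -
    have "x^6/720 \<le> x^4/24"
    proof -
      have "x^6 = x^4 * x^2" by (simp add: power_add[symmetric])
      also have "\<dots> \<le> x^4 * 2" using x2 by (intro mult_left_mono) auto
      finally have "x^6 \<le> x^4 * 2" .
      moreover have "0 \<le> x^4" by simp
      ultimately show ?thesis by linarith
    qed
    moreover have "x^2/2 \<le> 1" using x2 by simp
    ultimately show ?thesis by simp
  qed
  moreover have "(1 - x^2/2 + x^4/24 - x^6/720)^2 \<le> (cos x)^2"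
    using p0 cos_lb6[of x] assms by (intro power_mono) auto
  ultimately have "2 * (sin x)^3 \<le> x^3 * (1 + (1 - x^2/2 + x^4/24 - x^6/720)^2)
                   \<and> x^3 * (1 + (1 - x^2/2 + x^4/24 - x^6/720)^2) \<le> x^3 * (1 + (cos x)^2)"
    using poly_key[of x] assms x2 by (auto intro: mult_left_mono)
  thus ?thesis by linarith
qed

lemma gg_deriv: assumes "0 < x" "x < pi"
  shows "(gg has_real_derivative (1/x^2 - cos x / (sin x)^2)) (at x)"
proof -
  have "sin x \<noteq> 0" using sin_gt_zero[OF assms] by simp
  thus ?thesis unfolding gg_def [abs_def] using assms
    by (auto intro!: derivative_eq_intros simp: field_simps power2_eq_square)
qed

lemma gg'_deriv: assumes "0 < x" "x < pi"
  shows "((\<lambda>x. 1/x^2 - cos x / (sin x)^2) has_real_derivative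
          ((1 + (cos x)^2) / (sin x)^3 - 2 / x^3)) (at x)"
proof -
  have s: "sin x \<noteq> 0" using sin_gt_zero[OF assms] by simp
  have "((\<lambda>x. 1/x^2 - cos x / (sin x)^2) has_real_derivative
          (- (2 * x) / (x^2)^2 - ((- sin x) * (sin x)^2 - cos x * (2 * sin x * cos x)) / ((sin x)^2)^2)) (at x)"
    using s assms by (auto intro!: derivative_eq_intros)
  moreover have "(- (2 * x) / (x^2)^2 - ((- sin x) * (sin x)^2 - cos x * (2 * sin x * cos x)) / ((sin x)^2)^2)
      = ((1 + (cos x)^2) / (sin x)^3 - 2 / x^3)"
  proof -
    have 1: "((- sin x) * (sin x)^2 - cos x * (2 * sin x * cos x)) / ((sin x)^2)^2
       = - ((sin x)^2 + 2*(cos x)^2) / (sin x)^3" using s by (simp add: field_simps eval_nat_numeral)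
    have 2: "(sin x)^2 + 2*(cos x)^2 = 1 + (cos x)^2" using sin_cos_squared_add[of x] by linarith
    have 3: "- (2 * x) / (x^2)^2 = -2/x^3" using assms by (simp add: field_simps eval_nat_numeral)
    show ?thesis unfolding 1 2 3 using s by (simp add: field_simps)
  qed
  ultimately show ?thesis by simp
qed

lemma gg_convex: "convex_on {0<..<pi} gg"
proof (rule f''_ge0_imp_convex[where f'="\<lambda>x. 1/x^2 - cos x / (sin x)^2"
          and f''="\<lambda>x. (1 + (cos x)^2) / (sin x)^3 - 2 / x^3"])
  show "convex {0<..<pi}" by simp
  fix x assume x: "x \<in> {0<..<pi}"
  then show "DERIV gg x :> 1/x^2 - cos x / (sin x)^2" using gg_deriv by auto
  show "DERIV (\<lambda>x. 1/x^2 - cos x / (sin x)^2) x :> (1 + (cos x)^2) / (sin x)^3 - 2 / x^3"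
    using x gg'_deriv by auto
  have s: "0 < sin x" using x sin_gt_zero by auto
  have "2 * (sin x)^3 \<le> x^3 * (1 + (cos x)^2)" using x sin_cube_ineq by auto
  hence "2 / x^3 \<le> (1 + (cos x)^2) / (sin x)^3" using s x
    by (simp add: field_simps)
  thus "0 \<le> (1 + (cos x)^2) / (sin x)^3 - 2 / x^3" by simp
qed

lemma gg_deriv_nonneg: assumes "0 < x" "x < pi" shows "0 \<le> 1/x^2 - cos x / (sin x)^2"
proof -
  have s: "0 < sin x" using sin_gt_zero assms by auto
  have "x^2 * cos x \<le> (sin x)^2"
  proof (cases "x \<le> pi/2")
    case False
    have "0 \<le> cos (pi - x)" using assms False by (intro cos_ge_zero) auto
    hence "cos x \<le> 0" by simp
    hence "x^2 * cos x \<le> 0" by (simp add: mult_nonneg_nonpos)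
    thus ?thesis by (smt (verit) zero_le_power2)
  next
    case True
    have x2: "x^2 \<le> 4"
    proof -
      have "x \<le> 2" using True pi_less_4 by linarith
      hence "x^2 \<le> 2^2" using assms by (intro power_mono) auto
      thus ?thesis by (simp add: power2_eq_square)
    qed
    have l: "0 \<le> x - x^3/6"
    proof -
      have "x^3 = x * x^2" by (simp add: power3_eq_cube power2_eq_square)
      also have "\<dots> \<le> x * 6" using x2 True pi_less_4 assms
        by (intro mult_left_mono) (auto simp: power2_eq_square)
      finally show ?thesis by simp
    qed
    have "x^2 * cos x \<le> x^2 * (1 - x^2/2 + x^4/24)"
      using cos_ub4[of x] assms by (intro mult_left_mono) auto
    also have "\<dots> \<le> (x - x^3/6)^2"
    proof -
      have "(x - x^3/6)^2 - x^2 * (1 - x^2/2 + x^4/24) = x^4 * (1/6 - x^2/72)"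
        by (simp add: field_simps eval_nat_numeral)
      moreover have "0 \<le> x^4 * (1/6 - x^2/72)" using x2 by simp
      ultimately show ?thesis by linarith
    qed
    also have "\<dots> \<le> (sin x)^2" using l sin_lb3[of x] assms by (intro power_mono) auto
    finally show ?thesis .
  qed
  thus ?thesis using s assms by (simp add: field_simps)
qed

lemma gg_mono: assumes "0 < a" "a \<le> b" "b < pi" shows "gg a \<le> gg b"
  by (rule DERIV_nonneg_imp_nondecreasing[OF assms(2)])
     (use assms gg_deriv gg_deriv_nonneg in \<open>meson less_le_trans le_less_trans\<close>)

lemma gg_nonneg: assumes "0 < x" "x < pi" shows "0 \<le> gg x"
proof -
  have "sin x \<le> x" using assms sin_x_le_x by auto
  moreover have "0 < sin x" using sin_gt_zero assms by auto
  ultimately show ?thesis unfolding gg_def using assms by (simp add: field_simps)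
qed

lemma GG_deriv: assumes "0 < x" "x < pi" shows "(GG has_real_derivative gg x) (at x)"
proof -
  have c: "0 < cos (x/2)" using assms by (intro cos_gt_zero_pi) auto
  have s: "0 < sin (x/2)" using assms by (intro sin_gt_zero) auto
  have t: "0 < tan (x/2)" using assms by (intro tan_gt_zero) auto
  have "(GG has_real_derivative (inverse ((cos (x/2))^2) * (1/2) / tan (x/2) - (1/2) / (x/2))) (at x)"
    unfolding GG_def [abs_def] using c t assms
    by (auto intro!: derivative_eq_intros)
  moreover have "inverse ((cos (x/2))^2) * (1/2) / tan (x/2) - (1/2) / (x/2) = gg x"
  proof -
    have "sin x = 2 * sin (x/2) * cos (x/2)" using sin_double[of "x/2"] by simp
    thus ?thesis unfolding gg_def tan_def using c s assms by (simp add: field_simps power2_eq_square)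
  qed
  ultimately show ?thesis by simp
qed

lemma GG_pi2: "GG (pi/2) = ln (4/pi)"
  unfolding GG_def using tan_45 by (simp add: ln_div)

lemma gg_mid: assumes "0 < x - t" "x + t < pi" "0 \<le> t"
  shows "2 * gg x \<le> gg (x - t) + gg (x + t)"
proof -
  have "gg ((1 - 1/2) *\<^sub>R (x - t) + (1/2) *\<^sub>R (x + t)) \<le> (1 - 1/2) * gg (x - t) + (1/2) * gg (x + t)"
    by (rule convex_onD[OF gg_convex]) (use assms in auto)
  thus ?thesis by (simp add: field_simps)
qed

lemma gg_chord: assumes "0 < a" "a < b" "b < pi" "0 \<le> s" "s \<le> b - a"
  shows "gg (a + s) \<le> gg a + s / (b - a) * (gg b - gg a)"
proof -
  have "gg ((1 - s/(b-a)) *\<^sub>R a + (s/(b-a)) *\<^sub>R b) \<le> (1 - s/(b-a)) * gg a + (s/(b-a)) * gg b"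
    by (rule convex_onD[OF gg_convex]) (use assms in auto)
  moreover have "(1 - s/(b-a)) *\<^sub>R a + (s/(b-a)) *\<^sub>R b = a + s/(b-a) * (b - a)"
  proof -
    define l where "l = s/(b-a)"
    show ?thesis unfolding l_def[symmetric] by (simp add: algebra_simps)
  qed
  moreover have "s/(b-a) * (b - a) = s" using assms by simp
  ultimately have "gg (a+s) \<le> (1 - s/(b-a)) * gg a + (s/(b-a)) * gg b" by simp
  also have "\<dots> = gg a + s / (b - a) * (gg b - gg a)"
  proof -
    define l where "l = s/(b-a)"
    show ?thesis unfolding l_def[symmetric] by (simp add: algebra_simps)
  qed
  finally show ?thesis .
qed

lemma GG_mid: assumes "0 < x - t" "x + t < pi" "0 \<le> t"
  shows "2 * t * gg x \<le> GG (x + t) - GG (x - t)"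
proof -
  let ?f = "\<lambda>s. GG (x + s) - GG (x - s) - 2 * s * gg x"
  have "?f 0 \<le> ?f t"
  proof (rule DERIV_nonneg_imp_nondecreasing[OF assms(3)])
    fix s assume s: "0 \<le> s" "s \<le> t"
    have "(?f has_real_derivative (gg (x + s) * 1 - gg (x - s) * (0 - 1) - 2 * 1 * gg x)) (at s)"
      using s assms
      by (auto intro!: derivative_eq_intros DERIV_chain2[OF GG_deriv])
    moreover have "0 \<le> gg (x + s) * 1 - gg (x - s) * (0 - 1) - 2 * 1 * gg x"
      using gg_mid[of x s] s assms by simp
    ultimately show "\<exists>y. (?f has_real_derivative y) (at s) \<and> 0 \<le> y" by blast
  qed
  thus ?thesis by simp
qed

lemma GG_trap: assumes "0 < a" "a < b" "b < pi"
  shows "GG b - GG a \<le> (b - a) * (gg a + gg b) / 2"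
proof -
  define h where "h = b - a"
  have h: "0 < h" using assms by (simp add: h_def)
  let ?f = "\<lambda>s. s * gg a + s^2 / (2*h) * (gg b - gg a) - (GG (a + s) - GG a)"
  have "?f 0 \<le> ?f h"
  proof (rule DERIV_nonneg_imp_nondecreasing[of 0 h ?f])
    show "0 \<le> h" using h by simp
    fix s assume s: "0 \<le> s" "s \<le> h"
    have "(?f has_real_derivative (1 * gg a + (2 * s ^ 1 * 1) / (2*h) * (gg b - gg a) - (gg (a + s) * (0 + 1) - 0))) (at s)"
      using s assms h unfolding h_def
      by (auto intro!: derivative_eq_intros DERIV_chain2[OF GG_deriv])
    moreover have "0 \<le> 1 * gg a + (2 * s ^ 1 * 1) / (2*h) * (gg b - gg a) - (gg (a + s) * (0 + 1) - 0)"
    proof -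
      have "(2 * s ^ 1 * 1) / (2*h) = s / (b - a)" using h by (simp add: h_def field_simps)
      thus ?thesis using gg_chord[of a b s] s assms h unfolding h_def by simp
    qed
    ultimately show "\<exists>y. (?f has_real_derivative y) (at s) \<and> 0 \<le> y" by blast
  qed
  hence "0 \<le> h * gg a + h^2 / (2*h) * (gg b - gg a) - (GG (a + h) - GG a)" by simp
  moreover have "h^2 / (2*h) = h/2" using h by (simp add: power2_eq_square)
  moreover have "a + h = b" by (simp add: h_def)
  ultimately have "0 \<le> h * gg a + h/2 * (gg b - gg a) - (GG b - GG a)" by simp
  thus ?thesis unfolding h_def[symmetric] by (simp add: algebra_simps) argo
qed

lemma GG_mono_bounds: assumes "0 < a" "a \<le> b" "b < pi"
  shows "(b - a) * gg a \<le> GG b - GG a" and "GG b - GG a \<le> (b - a) * gg b"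
proof -
  let ?f = "\<lambda>s. GG (a + s) - GG a - s * gg a"
  have "?f 0 \<le> ?f (b - a)"
  proof (rule DERIV_nonneg_imp_nondecreasing[of 0 "b - a" ?f])
    show "0 \<le> b - a" using assms by simp
    fix s assume s: "0 \<le> s" "s \<le> b - a"
    have "(?f has_real_derivative (gg (a + s) * (0 + 1) - 0 - 1 * gg a)) (at s)"
      using s assms by (auto intro!: derivative_eq_intros DERIV_chain2[OF GG_deriv])
    moreover have "0 \<le> gg (a + s) * (0 + 1) - 0 - 1 * gg a" using gg_mono[of a "a+s"] s assms by simp
    ultimately show "\<exists>y. (?f has_real_derivative y) (at s) \<and> 0 \<le> y" by blast
  qed
  thus "(b - a) * gg a \<le> GG b - GG a" by simp
  let ?g = "\<lambda>s. s * gg b - (GG (a + s) - GG a)"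
  have "?g 0 \<le> ?g (b - a)"
  proof (rule DERIV_nonneg_imp_nondecreasing[of 0 "b - a" ?g])
    show "0 \<le> b - a" using assms by simp
    fix s assume s: "0 \<le> s" "s \<le> b - a"
    have "(?g has_real_derivative (1 * gg b - (gg (a + s) * (0 + 1) - 0))) (at s)"
      using s assms by (auto intro!: derivative_eq_intros DERIV_chain2[OF GG_deriv])
    moreover have "0 \<le> 1 * gg b - (gg (a + s) * (0 + 1) - 0)" using gg_mono[of "a+s" b] s assms by simp
    ultimately show "\<exists>y. (?g has_real_derivative y) (at s) \<and> 0 \<le> y" by blast
  qed
  thus "GG b - GG a \<le> (b - a) * gg b" by simp
qed

lemma tan_ge: assumes "0 \<le> u" "u < pi/2" shows "u \<le> tan u"
proof -
  let ?f = "\<lambda>s. tan s - s"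
  have "?f 0 \<le> ?f u"
  proof (rule DERIV_nonneg_imp_nondecreasing[OF assms(1)])
    fix s assume s: "0 \<le> s" "s \<le> u"
    have c: "0 < cos s" using s assms by (intro cos_gt_zero_pi) auto
    have "(?f has_real_derivative (inverse ((cos s)^2) - 1)) (at s)"
      using c by (auto intro!: derivative_eq_intros)
    moreover have "(cos s)^2 \<le> 1" by (simp add: cos_squared_eq)
    hence "1 \<le> inverse ((cos s)^2)" using c by (simp add: one_le_inverse_iff)
    ultimately show "\<exists>y. (?f has_real_derivative y) (at s) \<and> 0 \<le> y" by auto
  qed
  thus ?thesis by simp
qed

lemma GG_nonneg: assumes "0 < y" "y < pi" shows "0 \<le> GG y"
proof -
  have "y/2 \<le> tan (y/2)" using assms by (intro tan_ge) auto
  thus ?thesis unfolding GG_def using assms by simp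
qed

lemma GG_small: assumes "0 < y" "y \<le> 1" shows "GG y \<le> (y^2/8) / (1 - y^2/8)"
proof -
  define u where "u = y/2"
  have u: "0 < u" "u \<le> 1/2" using assms by (auto simp: u_def)
  have u2: "u^2 \<le> 1/4" using power_mono[of u "1/2" 2] u by (simp add: power2_eq_square)
  have cl: "1 - u^2/2 \<le> cos u" using cos_lb2[of u] u by simp
  have cpos: "0 < 1 - u^2/2" using u2 by simp
  have sl: "sin u \<le> u" using sin_x_le_x u by simp
  have s0: "0 < sin u" using u pi_gt3 by (intro sin_gt_zero) auto
  have "tan u = sin u / cos u" by (simp add: tan_def)
  also have "\<dots> \<le> u / (1 - u^2/2)"
    using sl cl cpos s0 u by (intro frac_le) auto
  finally have tu: "tan u \<le> u / (1 - u^2/2)" .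
  have tpos: "0 < tan u" using u pi_gt3 by (intro tan_gt_zero) auto
  have "GG y = ln (tan u / u)" unfolding GG_def u_def[symmetric] using tpos u by (simp add: ln_div)
  also have "\<dots> \<le> tan u / u - 1" using tpos u by (intro ln_le_minus_one) auto
  also have "\<dots> \<le> 1 / (1 - u^2/2) - 1" using tu u cpos by (simp add: field_simps)
  also have "\<dots> = (u^2/2) / (1 - u^2/2)" using cpos by (simp add: field_simps)
  also have "\<dots> = (y^2/8) / (1 - y^2/8)" by (simp add: u_def power2_eq_square)
  finally show ?thesis .
qed

lemma gg_pi2: "gg (pi/2) = 1 - 2/pi" by (simp add: gg_def)

lemma gg_near_pi2: assumes "0 \<le> r" "r < pi/2" shows "1 - 2 / (pi - 2*r) \<le> gg (pi/2 - r)"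
proof -
  have c: "0 < cos r" using assms by (intro cos_gt_zero_pi) auto
  have "1 \<le> 1 / cos r" using c by simp
  moreover have "gg (pi/2 - r) = 1 / cos r - 2 / (pi - 2*r)"
    unfolding gg_def by (simp add: sin_cos_eq field_simps)
  ultimately show ?thesis by simp
qed

lemma sum_upper:
  fixes d :: real assumes d: "0 < d" and m: "(real m + 1/2) * d < pi"
  shows "d * (\<Sum>k=1..m. gg (real k * d)) \<le> GG ((real m + 1/2) * d) - GG (d/2)"
  using m
proof (induction m)
  case 0 then show ?case by simp
next
  case (Suc m)
  have IH: "d * (\<Sum>k=1..m. gg (real k * d)) \<le> GG ((real m + 1/2) * d) - GG (d/2)"
    using Suc d by (intro Suc.IH) (auto simp: algebra_simps)
  have p: "0 \<le> d * real m" using d by simp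
  have p': "0 < d * real m + d/2" using p d by linarith
  have "2 * (d/2) * gg (real (Suc m) * d) \<le> GG (real (Suc m) * d + d/2) - GG (real (Suc m) * d - d/2)"
    using Suc.prems d p' by (intro GG_mid) (auto simp: algebra_simps)
  moreover have "real (Suc m) * d - d/2 = (real m + 1/2) * d" by (simp add: algebra_simps)
  moreover have "real (Suc m) * d + d/2 = (real (Suc m) + 1/2) * d" by (simp add: algebra_simps)
  ultimately show ?case using IH by (simp add: algebra_simps)
qed

lemma sum_lower_Suc:
  fixes d :: real assumes d: "0 < d" and m: "real (Suc j) * d < pi"
  shows "GG (real (Suc j) * d) - GG d \<le> d * ((\<Sum>k=1..Suc j. gg (real k * d)) - (gg d + gg (real (Suc j) * d)) / 2)"
  using m
proof (induction j)
  case 0 then show ?case by simp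
next
  case (Suc m)
  have p: "0 \<le> d * real m" using d by simp
  have p': "0 < d + d * real m" using p d by linarith
  have IH: "GG (real (Suc m) * d) - GG d \<le> d * ((\<Sum>k=1..Suc m. gg (real k * d)) - (gg d + gg (real (Suc m) * d)) / 2)"
    using Suc d p by (intro Suc.IH) (auto simp: algebra_simps)
  have T: "GG (real (Suc (Suc m)) * d) - GG (real (Suc m) * d) \<le> (real (Suc (Suc m)) * d - real (Suc m) * d) * (gg (real (Suc m) * d) + gg (real (Suc (Suc m)) * d)) / 2"
    using Suc d p' by (intro GG_trap) (auto simp: algebra_simps)
  have e: "real (Suc (Suc m)) * d - real (Suc m) * d = d" by (simp add: algebra_simps)
  have s: "(\<Sum>k=1..Suc (Suc m). gg (real k * d)) = (\<Sum>k=1..Suc m. gg (real k * d)) + gg (real (Suc (Suc m)) * d)"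
    by simp
  show ?case using IH T unfolding e s by (simp add: algebra_simps) argo
qed

lemma GG_eps: assumes "0 < d" "d \<le> 1/100" shows "GG d \<le> 1/10000"
proof -
  have "GG d \<le> (d^2/8) / (1 - d^2/8)" using assms by (intro GG_small) auto
  also have "\<dots> \<le> 1/10000"
  proof -
    have "d^2 \<le> (1/100)^2" using assms by (intro power_mono) auto
    hence "d^2 \<le> 1/10000" by (simp add: power2_eq_square)
    thus ?thesis by (simp add: field_simps)
  qed
  finally show ?thesis .
qed

lemma core_odd_upper:
  assumes d: "0 < d" and md: "(real m + 1/2) * d = pi/2"
  shows "d * (\<Sum>k=1..m. gg (real k * d)) \<le> ln (4/pi)"
proof -
  have "d * (\<Sum>k=1..m. gg (real k * d)) \<le> GG ((real m + 1/2) * d) - GG (d/2)"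
    using d md pi_gt_zero by (intro sum_upper) linarith+
  moreover have "0 \<le> GG (d/2)"
  proof -
    have "(real m + 1/2) * d = real m * d + d/2" by (simp add: algebra_simps)
    moreover have "0 \<le> real m * d" using d by simp
    ultimately have "d/2 \<le> (real m + 1/2) * d" by linarith
    thus ?thesis using d md by (intro GG_nonneg) auto
  qed
  ultimately show ?thesis using md GG_pi2 by simp
qed

lemma core_even_upper:
  assumes d: "0 < d" and md: "(real m + 1) * d = pi/2"
  shows "d * (\<Sum>k=1..m. gg (real k * d)) \<le> ln (4/pi) - (d/2) * (1 - 2/(pi - d))"
proof -
  have "(real m + 1) * d = real m * d + d" by (simp add: algebra_simps)
  moreover have "0 \<le> real m * d" using d by simp
  ultimately have dle: "d \<le> pi/2" using md by linarith
  have mh: "(real m + 1/2) * d = pi/2 - d/2" using md by (simp add: algebra_simps)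
  have "d * (\<Sum>k=1..m. gg (real k * d)) \<le> GG ((real m + 1/2) * d) - GG (d/2)"
    using d mh pi_gt_zero by (intro sum_upper) linarith+
  moreover have "0 \<le> GG (d/2)" using d dle by (intro GG_nonneg) auto
  moreover have "(pi/2 - (pi/2 - d/2)) * gg (pi/2 - d/2) \<le> GG (pi/2) - GG (pi/2 - d/2)"
    using d dle by (intro GG_mono_bounds(1)) auto
  moreover have "1 - 2 / (pi - 2*(d/2)) \<le> gg (pi/2 - d/2)"
    using d dle by (intro gg_near_pi2) auto
  ultimately have "d * (\<Sum>k=1..m. gg (real k * d)) \<le> GG (pi/2) - (d/2) * gg (pi/2 - d/2)"
    unfolding mh by simp
  also have "\<dots> \<le> ln (4/pi) - (d/2) * (1 - 2/(pi - d))"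
    using \<open>1 - 2 / (pi - 2*(d/2)) \<le> gg (pi/2 - d/2)\<close> d unfolding GG_pi2
    by (simp add: mult_left_mono)
  finally show ?thesis .
qed

lemma core_odd_lower:
  assumes d: "0 < d" "d \<le> 1/100" and m: "1 \<le> m" and md: "(real m + 1/2) * d = pi/2"
  shows "ln (4/pi) - (d/2) * (1 - 2/pi) - 1/10000 + (d/2) * (1 - 2/(pi - d)) \<le> d * (\<Sum>k=1..m. gg (real k * d))"
proof -
  define A where "A = (\<Sum>k=1..m. gg (real k * d))"
  have mh: "real m * d = pi/2 - d/2" using md by (simp add: algebra_simps)
  have dd: "d < pi/2" using d pi_gt3 by linarith
  obtain j where j: "m = Suc j" using m by (cases m) auto
  have lt: "real m * d < pi" using mh d pi_gt_zero by linarith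
  from sum_lower_Suc[of d j, folded j] d(1) lt
  have F1': "GG (real m * d) - GG d \<le> d * (A - (gg d + gg (real m * d)) / 2)"
    unfolding A_def by blast
  have F1: "GG (pi/2 - d/2) - GG d \<le> d * (A - (gg d + gg (pi/2 - d/2)) / 2)"
    using F1' unfolding mh .
  have F2: "GG (pi/2) - GG (pi/2 - d/2) \<le> (pi/2 - (pi/2 - d/2)) * gg (pi/2)"
    using d dd by (intro GG_mono_bounds(2)) auto
  have F3: "GG d \<le> 1/10000" using d by (intro GG_eps) auto
  have F4: "0 \<le> gg d" using d dd by (intro gg_nonneg) auto
  have F5: "1 - 2 / (pi - 2*(d/2)) \<le> gg (pi/2 - d/2)"
    using d dd by (intro gg_near_pi2) auto
  have P1: "0 \<le> d * gg d" using F4 d by simp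
  have P2: "(d/2) * (1 - 2/(pi - d)) \<le> (d/2) * gg (pi/2 - d/2)" using F5 d by (intro mult_left_mono) auto
  have E1: "d * (A - (gg d + gg (pi/2 - d/2)) / 2) = d * A - (d * gg d)/2 - (d/2) * gg (pi/2 - d/2)"
    by (simp add: algebra_simps)
  have E2: "(pi/2 - (pi/2 - d/2)) * gg (pi/2) = (d/2) * (1 - 2/pi)" by (simp add: gg_pi2)
  show ?thesis using F1 F2 F3 P1 P2 unfolding E1 E2 GG_pi2 A_def[symmetric] by linarith
qed

lemma core_even_lower:
  assumes d: "0 < d" "d \<le> 1/100" and m: "1 \<le> m" and md: "(real m + 1) * d = pi/2"
  shows "ln (4/pi) - d * (1 - 2/pi) - 1/10000 + (d/2) * (1 - 2/(pi - 2*d)) \<le> d * (\<Sum>k=1..m. gg (real k * d))"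
proof -
  define A where "A = (\<Sum>k=1..m. gg (real k * d))"
  have mh: "real m * d = pi/2 - d" using md by (simp add: algebra_simps)
  have dd: "d < pi/2" using d pi_gt3 by linarith
  obtain j where j: "m = Suc j" using m by (cases m) auto
  have lt: "real m * d < pi" using mh d pi_gt_zero by linarith
  from sum_lower_Suc[of d j, folded j] d(1) lt
  have F1': "GG (real m * d) - GG d \<le> d * (A - (gg d + gg (real m * d)) / 2)"
    unfolding A_def by blast
  have F1: "GG (pi/2 - d) - GG d \<le> d * (A - (gg d + gg (pi/2 - d)) / 2)"
    using F1' unfolding mh .
  have F2: "GG (pi/2) - GG (pi/2 - d) \<le> (pi/2 - (pi/2 - d)) * gg (pi/2)"
    using d dd by (intro GG_mono_bounds(2)) auto
  have F3: "GG d \<le> 1/10000" using d by (intro GG_eps) auto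
  have F4: "0 \<le> gg d" using d dd by (intro gg_nonneg) auto
  have F5: "1 - 2 / (pi - 2*d) \<le> gg (pi/2 - d)"
    using d dd by (intro gg_near_pi2) auto
  have P1: "0 \<le> d * gg d" using F4 d by simp
  have P2: "(d/2) * (1 - 2/(pi - 2*d)) \<le> (d/2) * gg (pi/2 - d)" using F5 d by (intro mult_left_mono) auto
  have E1: "d * (A - (gg d + gg (pi/2 - d)) / 2) = d * A - (d * gg d)/2 - (d/2) * gg (pi/2 - d)"
    by (simp add: algebra_simps)
  have E2: "(pi/2 - (pi/2 - d)) * gg (pi/2) = d * (1 - 2/pi)" by (simp add: gg_pi2)
  show ?thesis using F1 F2 F3 P1 P2 unfolding E1 E2 GG_pi2 A_def[symmetric] by linarith
qed

definition Ssum :: "nat \<Rightarrow> real" where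
  "Ssum n = (\<Sum>k\<in>{1..<n}. 1 / sin (real k * pi / real n))"

lemma sym_term: assumes "k \<le> n" "0 < n"
  shows "1 / sin (real (n - k) * pi / real n) = 1 / sin (real k * pi / real n)"
proof -
  have "real (n - k) * pi / real n = pi - real k * pi / real n"
    using assms by (simp add: of_nat_diff field_simps)
  thus ?thesis by simp
qed

lemma sum_rev_part:
  assumes "m < n"
  shows "(\<Sum>k\<in>{m+1..<n}. 1 / sin (real k * pi / real n)) = (\<Sum>k\<in>{1..n-m-1}. 1 / sin (real k * pi / real n))"
proof -
  have "(\<Sum>k\<in>{m+1..<n}. 1 / sin (real k * pi / real n)) = (\<Sum>k\<in>{1..n-m-1}. 1 / sin (real (n - k) * pi / real n))"
    by (rule sum.reindex_bij_witness[where i="\<lambda>k. n - k" and j="\<lambda>k. n - k"]) (use assms in auto)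
  also have "\<dots> = (\<Sum>k\<in>{1..n-m-1}. 1 / sin (real k * pi / real n))"
    using assms by (intro sum.cong refl sym_term) auto
  finally show ?thesis .
qed

lemma fold_odd: assumes "n = 2*m+1"
  shows "Ssum n = 2 * (\<Sum>k=1..m. 1 / sin (real k * (pi / real n)))"
proof -
  have e: "{1..<n} = {1..m} \<union> {m+1..<n}" using assms by auto
  have "Ssum n = (\<Sum>k\<in>{1..m} \<union> {m+1..<n}. 1 / sin (real k * pi / real n))"
    unfolding Ssum_def e by (rule refl)
  also have "\<dots> = (\<Sum>k\<in>{1..m}. 1 / sin (real k * pi / real n)) + (\<Sum>k\<in>{m+1..<n}. 1 / sin (real k * pi / real n))"
    by (rule sum.union_disjoint) auto
  also have "(\<Sum>k\<in>{m+1..<n}. 1 / sin (real k * pi / real n)) = (\<Sum>k\<in>{1..m}. 1 / sin (real k * pi / real n))"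
    using sum_rev_part[of m n] assms by simp
  finally show ?thesis by simp
qed

lemma fold_even: assumes "n = 2*m+2"
  shows "Ssum n = 2 * (\<Sum>k=1..m. 1 / sin (real k * (pi / real n))) + 1"
proof -
  have e: "{1..<n} = {1..m} \<union> ({m+1} \<union> {m+2..<n})" using assms by auto
  have "Ssum n = (\<Sum>k\<in>{1..m} \<union> ({m+1} \<union> {m+2..<n}). 1 / sin (real k * pi / real n))"
    unfolding Ssum_def e by (rule refl)
  also have "\<dots> = (\<Sum>k\<in>{1..m}. 1 / sin (real k * pi / real n)) + (\<Sum>k\<in>{m+1} \<union> {m+2..<n}. 1 / sin (real k * pi / real n))"
    by (rule sum.union_disjoint) auto
  also have "(\<Sum>k\<in>{m+1} \<union> {m+2..<n}. 1 / sin (real k * pi / real n)) = 1 / sin (real (m+1) * pi / real n)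
         + (\<Sum>k\<in>{m+2..<n}. 1 / sin (real k * pi / real n))"
    by (subst sum.union_disjoint) auto
  also have "(\<Sum>k\<in>{m+2..<n}. 1 / sin (real k * pi / real n)) = (\<Sum>k\<in>{1..m}. 1 / sin (real k * pi / real n))"
    using sum_rev_part[of "m+1" n] assms by simp
  also have "real (m+1) * pi / real n = pi/2" using assms by (simp add: field_simps)
  finally show ?thesis by simp
qed

lemma split_sum: assumes "0 < d" "real m * d < pi"
  shows "(\<Sum>k=1..m. 1 / sin (real k * d)) = harm m / d + (\<Sum>k=1..m. gg (real k * d))"
proof -
  have "(\<Sum>k=1..m. 1 / sin (real k * d)) = (\<Sum>k=1..m. 1 / (real k * d) + gg (real k * d))"
    by (intro sum.cong refl) (simp add: gg_def)
  also have "\<dots> = (\<Sum>k=1..m. inverse (real k)) / d + (\<Sum>k=1..m. gg (real k * d))"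
    by (simp add: sum.distrib sum_divide_distrib field_simps)
  finally show ?thesis by (simp add: harm_def)
qed

lemma c1: fixes P N h L :: real assumes "P > 0" "N > 1"
  shows "2 / (P/N) * (h + (L - ((P/N)/2) * (1 - 2/(P - P/N)))) + 1 = 2 * N / P * (h + L + 1/(N - 1))"
proof -
  have e: "P - P/N = P * (N - 1) / N" using assms by (simp add: field_simps)
  show ?thesis unfolding e using assms by (simp add: field_simps)
qed
lemma c2: fixes P N h L :: real assumes "P > 0" "N > 1"
  shows "2 * N / P * (h + L - 1/10000 + 1 / N - 1 / (N - 1))
      = 2 / (P/N) * (h + (L - ((P/N)/2) * (1 - 2/P) - 1/10000 + ((P/N)/2) * (1 - 2/(P - (P/N)))))"
proof -
  have e: "P - P/N = P * (N - 1) / N" using assms by (simp add: field_simps)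
  show ?thesis unfolding e using assms by (simp add: field_simps)
qed
lemma c3: fixes P N h L :: real assumes "P > 0" "N > 2"
  shows "2 * N / P * (h + L - 1/10000 + 2 / N - 1 / (N - 2))
      = 2 / (P/N) * (h + (L - (P/N) * (1 - 2/P) - 1/10000 + ((P/N)/2) * (1 - 2/(P - 2*(P/N))))) + 1"
proof -
  have e: "P - 2*(P/N) = P * (N - 2) / N" using assms by (simp add: field_simps)
  show ?thesis unfolding e using assms by (simp add: field_simps)
qed

lemma S_odd_upper: assumes n: "n = 2*m+1"
  shows "Ssum n \<le> 2 * real n / pi * (harm m + ln (4/pi))"
proof -
  define d where "d = pi / real n"
  have d: "0 < d" using n by (simp add: d_def)
  have md: "(real m + 1/2) * d = pi/2" using n by (simp add: d_def field_simps)
  have "(real m + 1/2) * d = real m * d + d/2" by (simp add: algebra_simps)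
  hence lt: "real m * d < pi" using md d pi_gt_zero by linarith
  have "Ssum n = 2 * (harm m / d + (\<Sum>k=1..m. gg (real k * d)))"
    using fold_odd[OF n] split_sum[OF d lt] unfolding d_def by simp
  also have "\<dots> = 2 / d * (harm m + d * (\<Sum>k=1..m. gg (real k * d)))"
    using d by (simp add: field_simps)
  also have "\<dots> \<le> 2 / d * (harm m + ln (4/pi))"
    using core_odd_upper[OF d md] d by (intro mult_left_mono) auto
  also have "2 / d = 2 * real n / pi" using n by (simp add: d_def)
  finally show ?thesis .
qed

lemma S_even_upper: assumes n: "n = 2*m+2"
  shows "Ssum n \<le> 2 * real n / pi * (harm m + ln (4/pi) + 1 / (real n - 1))"
proof -
  define d where "d = pi / real n"
  have d: "0 < d" using n by (simp add: d_def)
  have md: "(real m + 1) * d = pi/2" using n by (simp add: d_def field_simps)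
  have "(real m + 1) * d = real m * d + d" by (simp add: algebra_simps)
  hence lt: "real m * d < pi" using md d pi_gt_zero by linarith
  have "Ssum n = 2 * (harm m / d + (\<Sum>k=1..m. gg (real k * d))) + 1"
    using fold_even[OF n] split_sum[OF d lt] unfolding d_def by simp
  also have "\<dots> = 2 / d * (harm m + d * (\<Sum>k=1..m. gg (real k * d))) + 1"
    using d by (simp add: field_simps)
  also have "\<dots> \<le> 2 / d * (harm m + (ln (4/pi) - (d/2) * (1 - 2/(pi - d)))) + 1"
    using core_even_upper[OF d md] d by (intro add_right_mono mult_left_mono) auto
  also have "\<dots> = 2 * real n / pi * (harm m + ln (4/pi) + 1 / (real n - 1))"
    unfolding d_def by (rule c1) (use n in auto)
  finally show ?thesis .
qed

lemma S_odd_lower: assumes n: "n = 2*m+1" and n473: "473 \<le> n"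
  shows "2 * real n / pi * (harm m + ln (4/pi) - 1/10000 + 1 / real n - 1 / (real n - 1)) \<le> Ssum n"
proof -
  define d where "d = pi / real n"
  have d: "0 < d" using n by (simp add: d_def)
  have d100: "d \<le> 1/100" using n473 pi_less_4 by (simp add: d_def field_simps)
  have m1: "1 \<le> m" using n n473 by linarith
  have md: "(real m + 1/2) * d = pi/2" using n by (simp add: d_def field_simps)
  have "(real m + 1/2) * d = real m * d + d/2" by (simp add: algebra_simps)
  hence lt: "real m * d < pi" using md d pi_gt_zero by linarith
  have "2 * real n / pi * (harm m + ln (4/pi) - 1/10000 + 1 / real n - 1 / (real n - 1))
      = 2 / d * (harm m + (ln (4/pi) - (d/2) * (1 - 2/pi) - 1/10000 + (d/2) * (1 - 2/(pi - d))))"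
    unfolding d_def by (rule c2) (use n n473 in auto)
  also have "\<dots> \<le> 2 / d * (harm m + d * (\<Sum>k=1..m. gg (real k * d)))"
    using core_odd_lower[OF d d100 m1 md] d by (intro mult_left_mono) auto
  also have "\<dots> = 2 * (harm m / d + (\<Sum>k=1..m. gg (real k * d)))"
    using d by (simp add: field_simps)
  also have "\<dots> = Ssum n"
    using fold_odd[OF n] split_sum[OF d lt] unfolding d_def by simp
  finally show ?thesis .
qed

lemma S_even_lower: assumes n: "n = 2*m+2" and n473: "473 \<le> n"
  shows "2 * real n / pi * (harm m + ln (4/pi) - 1/10000 + 2 / real n - 1 / (real n - 2)) \<le> Ssum n"
proof -
  define d where "d = pi / real n"
  have d: "0 < d" using n by (simp add: d_def)
  have d100: "d \<le> 1/100" using n473 pi_less_4 by (simp add: d_def field_simps)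
  have m1: "1 \<le> m" using n n473 by linarith
  have md: "(real m + 1) * d = pi/2" using n by (simp add: d_def field_simps)
  have "(real m + 1) * d = real m * d + d" by (simp add: algebra_simps)
  hence lt: "real m * d < pi" using md d pi_gt_zero by linarith
  have "2 * real n / pi * (harm m + ln (4/pi) - 1/10000 + 2 / real n - 1 / (real n - 2))
      = 2 / d * (harm m + (ln (4/pi) - d * (1 - 2/pi) - 1/10000 + (d/2) * (1 - 2/(pi - 2*d)))) + 1"
    unfolding d_def by (rule c3) (use n n473 in auto)
  also have "\<dots> \<le> 2 / d * (harm m + d * (\<Sum>k=1..m. gg (real k * d))) + 1"
    using core_even_lower[OF d d100 m1 md] d by (intro add_right_mono mult_left_mono) auto
  also have "\<dots> = 2 * (harm m / d + (\<Sum>k=1..m. gg (real k * d))) + 1"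
    using d by (simp add: field_simps)
  also have "\<dots> = Ssum n"
    using fold_even[OF n] split_sum[OF d lt] unfolding d_def by simp
  finally show ?thesis .
qed

lemma harm63: "(47282659/10000000) \<le> (harm 63 :: real)" "(harm 63 :: real) \<le> (47282660/10000000)"
  by (simp_all add: harm_expand)

lemma ln_bounds_helper:
  fixes x lo hi :: real and n :: nat
  assumes "x > 1"
    and "lo \<le> (\<Sum>k<n. 2*((x-1)/(x+1))^(2*k+1) / of_nat (2*k+1))"
    and "(\<Sum>k<n. 2*((x-1)/(x+1))^(2*k+1) / of_nat (2*k+1)) + 2 * (((x-1)/(x+1))^(2*n+1) / (1 - ((x-1)/(x+1))^2) / of_nat (2*n+1)) \<le> hi"
  shows "lo \<le> ln x" "ln x \<le> hi"
  using ln_approx_bounds[OF assms(1), of n] assms(2,3) by auto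

lemma ln2b: "(69314717/100000000) \<le> ln (2::real)" "ln (2::real) \<le> (69314719/100000000)"
  by (rule ln_bounds_helper(1)[where n=8 and hi=1]; simp add: lessThan_nat_numeral power_divide)
     (rule ln_bounds_helper(2)[where n=8 and lo=0]; simp add: lessThan_nat_numeral power_divide)

lemma ln6459: "(8134563/100000000) \<le> ln (64/59::real)"
  by (rule ln_bounds_helper(1)[where n=3 and hi=1]; simp add: lessThan_nat_numeral power_divide)

lemma ln256237: "ln (256/237::real) \<le> (7711731/100000000)"
  by (rule ln_bounds_helper(2)[where n=3 and lo=0]; simp add: lessThan_nat_numeral power_divide)

lemma pib: "(314159/100000) \<le> pi" "pi \<le> (31416/10000)"
  using pi_approx by (simp_all add: power_divide)

lemma ln4pi: "(24156/100000) \<le> ln (4/pi)" "ln (4/pi) \<le> (24157/100000)"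
proof -
  have a: "(24156/100000) \<le> ln (5000/3927::real)"
    by (rule ln_bounds_helper(1)[where n=4 and hi=1]; simp add: lessThan_nat_numeral power_divide)
  have b: "ln (400000/314159::real) \<le> (24157/100000)"
    by (rule ln_bounds_helper(2)[where n=4 and lo=0]; simp add: lessThan_nat_numeral power_divide)
  have "(5000/3927::real) \<le> 4/pi" using pib by (simp add: field_simps)
  hence "ln (5000/3927::real) \<le> ln (4/pi)" by (rule ln_mono) simp
  thus "(24156/100000) \<le> ln (4/pi)" using a by linarith
  have "4/pi \<le> (400000/314159::real)" using pib by (simp add: field_simps)
  hence "ln (4/pi) \<le> ln (400000/314159::real)" by (rule ln_mono) simp
  thus "ln (4/pi) \<le> (24157/100000)" using b by linarith
qed

lemma ln_pow2: "ln (2^k :: real) = real k * ln 2"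
  by (simp add: ln_realpow)

lemma gamma_ub: "euler_mascheroni \<le> harm 63 - 6 * ln 2 + (1/126::real)"
proof -
  have "(euler_mascheroni::real) \<le> harm (Suc 62) - ln (real_of_nat (62 + 2)) + 1/real_of_nat (2 * (62 + 1))"
    by (rule euler_mascheroni_upper)
  moreover have "ln (real_of_nat (62 + 2)) = 6 * ln (2::real)" using ln_pow2[of 6] by simp
  ultimately show ?thesis by simp
qed

lemma gamma_lb: "harm 63 - 6 * ln 2 + 1/128 \<le> (euler_mascheroni::real)"
proof -
  have "(euler_mascheroni::real) \<ge> harm (Suc 62) - ln (real_of_nat (62 + 2)) + 1/real_of_nat (2 * (62 + 2))"
    by (rule euler_mascheroni_lower)
  moreover have "ln (real_of_nat (62 + 2)) = 6 * ln (2::real)" using ln_pow2[of 6] by simp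
  ultimately show ?thesis by simp
qed

lemma ln236: "ln (236::real) = 8 * ln 2 - ln (64/59)"
proof -
  have "ln (236::real) = ln (2^8 / (64/59))" by simp
  also have "\<dots> = ln (2^8) - ln (64/59)" by (rule ln_divide_pos) auto
  finally show ?thesis using ln_pow2[of 8] by simp
qed

lemma ln237: "ln (237::real) = 8 * ln 2 - ln (256/237)"
proof -
  have "ln (237::real) = ln (2^8 / (256/237))" by simp
  also have "\<dots> = ln (2^8) - ln (256/237)" by (rule ln_divide_pos) auto
  finally show ?thesis using ln_pow2[of 8] by simp
qed

lemma N1: "(euler_mascheroni::real) + ln 236 + ln (4/pi) + 1/100000 < 2 * pi"
  using gamma_ub ln236 harm63 ln2b ln6459 ln4pi pib by linarith

lemma N2: "2 * pi < (euler_mascheroni::real) + ln 237 + ln (4/pi) - 1/10000 - 1/472 - 1/(472*473)"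
  using gamma_lb ln237 harm63 ln2b ln256237 ln4pi pib by linarith

lemma harm_ub: assumes "1 \<le> m" shows "harm m \<le> (euler_mascheroni::real) + ln (real m + 1) - 1 / (2 * (real m + 1))"
proof -
  obtain j where j: "m = Suc j" using assms by (cases m) auto
  have "(euler_mascheroni::real) \<ge> harm (Suc j) - ln (real_of_nat (j + 2)) + 1/real_of_nat (2 * (j + 2))"
    by (rule euler_mascheroni_lower)
  moreover have "real_of_nat (j + 2) = real m + 1" "real_of_nat (2 * (j + 2)) = 2 * (real m + 1)"
    using j by simp_all
  ultimately show ?thesis using j by simp
qed

lemma harm_lb: assumes "1 \<le> m" shows "(euler_mascheroni::real) + ln (real m + 1) - 1 / (2 * real m) \<le> harm m"
proof -
  obtain j where j: "m = Suc j" using assms by (cases m) auto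
  have "(euler_mascheroni::real) \<le> harm (Suc j) - ln (real_of_nat (j + 2)) + 1/real_of_nat (2 * (j + 1))"
    by (rule euler_mascheroni_upper)
  moreover have "real_of_nat (j + 2) = real m + 1" "real_of_nat (2 * (j + 1)) = 2 * real m"
    using j by simp_all
  ultimately show ?thesis using j by simp
qed

lemma ln_mono_nat: assumes "1 \<le> a" "a \<le> b" shows "ln (real a) \<le> ln (real b)"
  using assms by simp

lemma aux_even: assumes "1 \<le> m" "m \<le> 235"
  shows "ln (real m + 1) + 1 / (2 * real m + 1) - 1 / (2 * (real m + 1)) \<le> ln 236 + 1/100000"
proof -
  have r: "1 / (2 * real m + 1) - 1 / (2 * (real m + 1)) = 1 / ((2 * real m + 1) * (2 * real m + 2))"
    by (simp add: field_simps)
  have rpos: "0 < 1 / ((2 * real m + 1) * (2 * real m + 2))" by simp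
  consider "m = 235" | "m \<le> 126" | "127 \<le> m" "m \<le> 234" using assms by linarith
  then show ?thesis
  proof cases
    case 1 then show ?thesis by simp
  next
    case 2
    have A: "ln (real m + 1) \<le> ln 128"
    proof -
      have "real m + 1 \<le> 128" using 2 by simp
      thus ?thesis by (rule ln_mono) simp
    qed
    have E: "ln (128::real) = 7 * ln 2" using ln_pow2[of 7] by simp
    have l1: "ln (real m + 1) \<le> 7 * ln 2" using A E by linarith
    have "1 / ((2 * real m + 1) * (2 * real m + 2)) \<le> 1/3"
    proof -
      have "(3::real) \<le> 2 * real m + 1" "(4::real) \<le> 2 * real m + 2" using assms by simp_all
      hence "3 * 4 \<le> (2 * real m + 1) * (2 * real m + 2)" by (intro mult_mono) auto
      hence "3 \<le> (2 * real m + 1) * (2 * real m + 2)" by linarith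
      thus ?thesis by (simp add: field_simps)
    qed
    moreover have "ln (64/59::real) \<le> 64/59 - 1" by (rule ln_le_minus_one) simp
    ultimately show ?thesis using r l1 ln236 ln2b by linarith
  next
    case 3
    have "ln (real m + 1) \<le> ln 235"
    proof -
      have "real m + 1 \<le> 235" using 3 by simp
      thus ?thesis by (rule ln_mono) simp
    qed
    moreover have "2 / 471 \<le> ln (236::real) - ln 235"
      using ln_inverse_approx_ge[of 235 236] by simp
    moreover have "1 / ((2 * real m + 1) * (2 * real m + 2)) \<le> 1 / 65280"
    proof -
      have "(255::real) \<le> 2 * real m + 1" "(256::real) \<le> 2 * real m + 2" using 3 by simp_all
      hence "255 * 256 \<le> (2 * real m + 1) * (2 * real m + 2)" by (intro mult_mono) auto
      hence "65280 \<le> (2 * real m + 1) * (2 * real m + 2)" by simp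
      thus ?thesis by (intro divide_left_mono) auto
    qed
    ultimately show ?thesis using r by linarith
  qed
qed

lemma S_small: assumes "2 \<le> n" "n \<le> 472" shows "Ssum n < 4 * real n"
proof -
  have np: "0 < 2 * real n / pi" using assms by simp
  have key: "\<exists>B. Ssum n \<le> 2 * real n / pi * B \<and> B < 2 * pi"
  proof (cases "even n")
    case False
    then obtain m where n: "n = 2*m+1" using oddE by blast
    have m: "1 \<le> m" "m \<le> 235" using assms n by auto
    have "harm m \<le> euler_mascheroni + ln (real m + 1) - 1 / (2 * (real m + 1))" using harm_ub m by simp
    moreover have "0 < 1 / (2 * (real m + 1))" by simp
    moreover have "ln (real m + 1) \<le> ln 236"
    proof -
      have "real m + 1 \<le> 236" using m by simp
      thus ?thesis by (rule ln_mono) simp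
    qed
    ultimately have "harm m + ln (4/pi) < 2 * pi" using N1 by linarith
    thus ?thesis using S_odd_upper[OF n] by blast
  next
    case True
    then obtain k where "n = 2*k" by blast
    then obtain m where n: "n = 2*m+2" using assms by (cases k) auto
    have rn: "real n - 1 = 2 * real m + 1" using n by simp
    show ?thesis
    proof (cases "m = 0")
      case True
      hence "harm m + ln (4/pi) + 1 / (real n - 1) < 2 * pi" using n ln4pi pib by (simp add: harm_expand)
      thus ?thesis using S_even_upper[OF n] by blast
    next
      case False
      hence m: "1 \<le> m" "m \<le> 235" using assms n by auto
      have "harm m \<le> euler_mascheroni + ln (real m + 1) - 1 / (2 * (real m + 1))" using harm_ub m by simp
      hence "harm m + ln (4/pi) + 1 / (real n - 1) < 2 * pi"
        unfolding rn using aux_even[OF m] N1 by linarith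
      thus ?thesis using S_even_upper[OF n] by blast
    qed
  qed
  then obtain B where B: "Ssum n \<le> 2 * real n / pi * B" "B < 2 * pi" by blast
  have "2 * real n / pi * B < 2 * real n / pi * (2 * pi)" using B(2) np by (intro mult_strict_left_mono)
  also have "\<dots> = 4 * real n" by simp
  finally show ?thesis using B(1) by linarith
qed

lemma S_large: assumes "473 \<le> n" shows "4 * real n < Ssum n"
proof -
  have np: "0 < 2 * real n / pi" using assms by simp
  have key: "\<exists>B. 2 * real n / pi * B \<le> Ssum n \<and> 2 * pi < B"
  proof (cases "even n")
    case False
    then obtain m where n: "n = 2*m+1" using oddE by blast
    have m: "236 \<le> m" using assms n by auto
    have rn: "real n = 2 * real m + 1" "real n - 1 = 2 * real m" using n by simp_all
    have h: "euler_mascheroni + ln (real m + 1) - 1 / (2 * real m) \<le> harm m" using harm_lb m by simp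
    have l: "ln 237 \<le> ln (real m + 1)"
    proof -
      have "237 \<le> real m + 1" using m by simp
      thus ?thesis by (rule ln_mono) simp
    qed
    have a: "1 / (2 * real m) \<le> 1/472" using m by (simp add: field_simps)
    have b: "1 / (2 * real m) - 1 / (2 * real m + 1) \<le> 1 / (472 * 473)"
    proof -
      have "1 / (2 * real m) - 1 / (2 * real m + 1) = 1 / (2 * real m * (2 * real m + 1))"
        using m by (simp add: field_simps)
      also have "\<dots> \<le> 1 / (472 * 473)"
      proof -
        have "(472::real) \<le> 2 * real m" "(473::real) \<le> 2 * real m + 1" using m by simp_all
        hence "472 * 473 \<le> 2 * real m * (2 * real m + 1)" by (intro mult_mono) auto
        thus ?thesis by (intro divide_left_mono) auto
      qed
      finally show ?thesis .
    qed
    have "2 * pi < harm m + ln (4/pi) - 1/10000 + 1 / (2 * real m + 1) - 1 / (2 * real m)"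
      using h l a b N2 by linarith
    moreover have "1 / real n - 1 / (real n - 1) = 1 / (2 * real m + 1) - 1 / (2 * real m)" using rn by simp
    ultimately have "2 * pi < harm m + ln (4/pi) - 1/10000 + 1 / real n - 1 / (real n - 1)" by linarith
    thus ?thesis using S_odd_lower[OF n assms] by blast
  next
    case True
    then obtain k where "n = 2*k" by blast
    then obtain m where n: "n = 2*m+2" using assms by (cases k) auto
    have m: "236 \<le> m" using assms n by auto
    have rn: "2 / real n = 1 / (real m + 1)" "real n - 2 = 2 * real m" using n by (simp_all add: field_simps)
    have h: "euler_mascheroni + ln (real m + 1) - 1 / (2 * real m) \<le> harm m" using harm_lb m by simp
    have l: "ln 237 \<le> ln (real m + 1)"
    proof -
      have "237 \<le> real m + 1" using m by simp
      thus ?thesis by (rule ln_mono) simp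
    qed
    have b: "1 / (2 * real m) + 1 / (2 * real m) - 1 / (real m + 1) \<le> 1/472 + 1 / (472 * 473)"
    proof -
      have "1 / (2 * real m) + 1 / (2 * real m) - 1 / (real m + 1) = 1 / (real m * (real m + 1))"
        using m by (simp add: field_simps)
      also have "\<dots> \<le> 1 / (236 * 237)"
      proof -
        have "(236::real) \<le> real m" "(237::real) \<le> real m + 1" using m by simp_all
        hence "236 * 237 \<le> real m * (real m + 1)" by (intro mult_mono) auto
        thus ?thesis by (intro divide_left_mono) auto
      qed
      also have "\<dots> \<le> 1/472 + 1 / (472 * 473)" by simp
      finally show ?thesis .
    qed
    have "2 * pi < harm m + ln (4/pi) - 1/10000 + 2 / real n - 1 / (real n - 2)"
      unfolding rn using h l b N2 by linarith
    thus ?thesis using S_even_lower[OF n] assms by blast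
  qed
  then obtain B where B: "2 * real n / pi * B \<le> Ssum n" "2 * pi < B" by blast
  have "4 * real n = 2 * real n / pi * (2 * pi)" by simp
  also have "\<dots> < 2 * real n / pi * B" using B(2) np by (intro mult_strict_left_mono)
  finally show ?thesis using B(1) by linarith
qed

lemma Ssum_ne: assumes "2 \<le> n" shows "Ssum n \<noteq> 4 * real n"
proof (cases "n \<le> 472")
  case True then show ?thesis using S_small[OF assms] by simp
next
  case False then show ?thesis using S_large[of n] by simp
qed

definition om :: "nat \<Rightarrow> nat \<Rightarrow> complex" where "om n k = cis (2 * pi * real k / real n)"
definition WW :: "nat \<Rightarrow> complex" where
  "WW n = (\<Sum>k\<in>{1..<n}. (om n k - 1) / complex_of_real (cmod (om n k - 1) ^ 3))"

lemma cmod_om: assumes "1 \<le> k" "k < n"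
  shows "cmod (om n k - 1) = 2 * sin (real k * pi / real n)"
proof -
  define s where "s = real k * pi / real n"
  have s0: "0 < s" using assms by (simp add: s_def)
  have s1: "s < pi" using assms by (simp add: s_def field_simps)
  have sp: "0 < sin s" using s0 s1 by (rule sin_gt_zero)
  have th: "2 * pi * real k / real n = 2 * s" by (simp add: s_def)
  have o: "om n k = cis (2 * s)" unfolding om_def th ..
  have c1: "(cmod (om n k - 1))^2 = (Re (om n k - 1))^2 + (Im (om n k - 1))^2" by (rule cmod_power2)
  have c2: "Re (om n k - 1) = cos (2 * s) - 1" unfolding o by simp
  have c3: "Im (om n k - 1) = sin (2 * s)" unfolding o by simp
  have c4: "(cos (2 * s) - 1)^2 + (sin (2 * s))^2 = 2 - 2 * cos (2 * s)"
  proof -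
    have "(cos (2 * s) - 1)^2 = (cos (2 * s))^2 - 2 * cos (2 * s) + 1" by (simp add: power2_diff)
    thus ?thesis using sin_cos_squared_add[of "2 * s"] by linarith
  qed
  have c5: "2 - 2 * cos (2 * s) = (2 * sin s)^2"
  proof -
    have "cos (2 * s) = 1 - 2 * (sin s)^2" by (rule cos_double_sin)
    moreover have "(2 * sin s)^2 = 4 * (sin s)^2" by (simp add: power_mult_distrib)
    ultimately show ?thesis by linarith
  qed
  have "(cmod (om n k - 1))^2 = (2 * sin s)^2" by (simp only: c1 c2 c3 c4 c5)
  moreover have pos: "0 \<le> 2 * sin s" using sp by simp
  ultimately have "cmod (om n k - 1) = 2 * sin s" using power2_eq_imp_eq norm_ge_zero by blast
  thus ?thesis unfolding s_def .
qed

lemma Re_term: assumes "1 \<le> k" "k < n"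
  shows "Re ((om n k - 1) / complex_of_real (cmod (om n k - 1) ^ 3)) = - 1 / (4 * sin (real k * pi / real n))"
proof -
  define s where "s = real k * pi / real n"
  have s0: "0 < s" using assms by (simp add: s_def)
  have s1: "s < pi" using assms by (simp add: s_def field_simps)
  have sp: "0 < sin s" using s0 s1 by (rule sin_gt_zero)
  have th: "2 * pi * real k / real n = 2 * s" by (simp add: s_def)
  have "Re ((om n k - 1) / complex_of_real (cmod (om n k - 1) ^ 3)) = (cos (2 * s) - 1) / (2 * sin s)^3"
    unfolding cmod_om[OF assms] s_def[symmetric] Re_divide_of_real by (simp add: om_def th)
  also have "\<dots> = - 2 * (sin s)^2 / (2 * sin s)^3" by (simp add: cos_double_sin)
  also have "\<dots> = - 1 / (4 * sin s)" using sp by (simp add: field_simps power2_eq_square power3_eq_cube)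
  finally show ?thesis by (simp add: s_def)
qed

lemma Re_WW: "Re (WW n) = - Ssum n / 4"
proof -
  have "Re (WW n) = (\<Sum>k\<in>{1..<n}. - 1 / (4 * sin (real k * pi / real n)))"
    unfolding WW_def Re_sum by (intro sum.cong refl Re_term) auto
  also have "\<dots> = (\<Sum>k\<in>{1..<n}. - (1 / sin (real k * pi / real n)) / 4)"
    by (intro sum.cong refl) (simp add: field_simps)
  also have "\<dots> = (\<Sum>k\<in>{1..<n}. - (1 / sin (real k * pi / real n))) / 4"
    by (rule sum_divide_distrib[symmetric])
  also have "\<dots> = - Ssum n / 4" unfolding Ssum_def by (simp only: sum_negf)
  finally show ?thesis .
qed

lemma eq_from_sol:
  assumes n: "2 \<le> n" and a: "a \<noteq> 0" and m1: "m1 \<noteq> 0"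
    and sol: "rel_eq_solution (n + 1) (mass_sys m0 m1) (ngon_config n a)"
  shows "m1 * Re (WW n) = m0 - cmod a ^ 3"
proof -
  let ?r = "ngon_config n a" and ?mu = "mass_sys m0 m1"
  define A where "A = complex_of_real (cmod a ^ 3)"
  have A0: "A \<noteq> 0" using a by (simp add: A_def)
  define F where "F j = complex_of_real (?mu 1 * ?mu j) * (?r j - ?r 1) / complex_of_real (cmod (?r j - ?r 1) ^ 3)" for j
  have "\<forall>t::real. \<forall>i<n+1.
        complex_of_real (?mu i) * (- (?r i * exp (\<i> * of_real t))) =
        (\<Sum>j\<in>{..<n+1} - {i}.
           complex_of_real (?mu i * ?mu j) *
           (?r j * exp (\<i> * of_real t) - ?r i * exp (\<i> * of_real t)) /
           complex_of_real (cmod (?r j * exp (\<i> * of_real t) - ?r i * exp (\<i> * of_real t)) ^ 3))"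
    using sol unfolding rel_eq_solution_def by blast
  from this[rule_format, of 1 0] n
  have E0: "complex_of_real (?mu 1) * (- (?r 1)) = (\<Sum>j\<in>{..<n+1} - {1}. F j)"
    unfolding F_def by simp
  have r1: "?r 1 = a" by (simp add: ngon_config_def)
  have r0: "?r 0 = 0" by (simp add: ngon_config_def)
  have rk: "?r (k + 1) = a * om n k" for k by (simp add: ngon_config_def om_def)
  have mu1: "?mu 1 = m1" and mu0: "?mu 0 = m0" and muk: "?mu (k+1) = m1" for k
    by (simp_all add: mass_sys_def)
  have set: "{..<n+1} - {1} = insert 0 {1+1..<n+1}" by auto
  have "(\<Sum>j\<in>{..<n+1} - {1}. F j) = F 0 + (\<Sum>j\<in>{1+1..<n+1}. F j)"
    unfolding set by (subst sum.insert) auto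
  also have "(\<Sum>j\<in>{1+1..<n+1}. F j) = (\<Sum>k\<in>{1..<n}. F (k + 1))"
    by (rule sum.shift_bounds_nat_ivl)
  also have "F 0 = - complex_of_real (m1 * m0) * a / A"
    unfolding F_def r0 r1 mu0 mu1 A_def by simp
  also have "(\<Sum>k\<in>{1..<n}. F (k + 1)) = (\<Sum>k\<in>{1..<n}. complex_of_real (m1 * m1) * a / A * ((om n k - 1) / complex_of_real (cmod (om n k - 1) ^ 3)))"
  proof (intro sum.cong refl)
    fix k assume k: "k \<in> {1..<n}"
    have c: "cmod (om n k - 1) = 2 * sin (real k * pi / real n)" using k cmod_om by auto
    have sp: "0 < sin (real k * pi / real n)" using k by (intro sin_gt_zero) (auto simp: field_simps)
    have c0: "cmod (om n k - 1) \<noteq> 0" using c sp by simp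
    have e: "a * om n k - a = a * (om n k - 1)" by (simp add: algebra_simps)
    have e2: "cmod (a * (om n k - 1)) ^ 3 = cmod a ^ 3 * cmod (om n k - 1) ^ 3"
      by (simp add: norm_mult power_mult_distrib)
    show "F (k + 1) = complex_of_real (m1 * m1) * a / A * ((om n k - 1) / complex_of_real (cmod (om n k - 1) ^ 3))"
      unfolding F_def rk r1 mu1 muk e e2 A_def using c0 a by (simp add: field_simps)
  qed
  also have "\<dots> = complex_of_real (m1 * m1) * a / A * WW n"
    unfolding WW_def by (simp add: sum_distrib_left)
  finally have E1: "complex_of_real m1 * (- a) = - complex_of_real (m1 * m0) * a / A + complex_of_real (m1 * m1) * a / A * WW n"
    using E0 unfolding mu1 r1 by simp
  have "complex_of_real m1 * WW n = complex_of_real m0 - A"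
  proof -
    have "(complex_of_real m1 * (- a)) * (A / (complex_of_real m1 * a)) =
          (- complex_of_real (m1 * m0) * a / A + complex_of_real (m1 * m1) * a / A * WW n) * (A / (complex_of_real m1 * a))"
      using E1 by simp
    hence H0: "A * (a * (complex_of_real m0 * complex_of_real m1)) =
      A * (A * (a * complex_of_real m1)) + A * (a * (WW n * (complex_of_real m1 * complex_of_real m1)))"
      using A0 a m1 by (simp add: field_simps)
    have H: "(A * a * complex_of_real m1) * complex_of_real m0 = (A * a * complex_of_real m1) * (A + WW n * complex_of_real m1)"
      using H0 by (simp add: algebra_simps)
    have nz: "A * a * complex_of_real m1 \<noteq> 0" using A0 a m1 by simp
    have "complex_of_real m0 = A + WW n * complex_of_real m1" using mult_left_cancel[OF nz] H by blast
    thus ?thesis by (simp add: algebra_simps)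
  qed
  hence "Re (complex_of_real m1 * WW n) = Re (complex_of_real m0 - A)" by simp
  thus ?thesis by (simp add: A_def)
qed

theorem proposition3:
  fixes n :: nat and a :: complex
  assumes "n \<ge> 2" and "a \<noteq> 0"
  shows "\<not> really_perverse_ngon n a"
proof
  assume "really_perverse_ngon n a"
  then obtain m0 m1 m0' m1' where
    pos: "m0 > 0" "m1 > 0" "m0' > 0" "m1' > 0" and ne: "(m0, m1) \<noteq> (m0', m1')"
    and tot: "m0 + real n * m1 = m0' + real n * m1'"
    and s1: "rel_eq_solution (n + 1) (mass_sys m0 m1) (ngon_config n a)"
    and s2: "rel_eq_solution (n + 1) (mass_sys m0' m1') (ngon_config n a)"
    unfolding really_perverse_ngon_def by blast
  define w where "w = Re (WW n)"
  have e1: "m1 * w = m0 - cmod a ^ 3" unfolding w_def using eq_from_sol[OF assms _ s1] pos by simp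
  have e2: "m1' * w = m0' - cmod a ^ 3" unfolding w_def using eq_from_sol[OF assms _ s2] pos by simp
  have m1ne: "m1 \<noteq> m1'"
  proof
    assume "m1 = m1'"
    hence "m0 = m0'" using tot by simp
    thus False using ne \<open>m1 = m1'\<close> by simp
  qed
  have "(m1 - m1') * (w + real n) = 0"
  proof -
    have "(m1 - m1') * (w + real n) = (m1 * w - m1' * w) + real n * m1 - real n * m1'"
      by (simp add: algebra_simps)
    also have "\<dots> = 0" using e1 e2 tot by linarith
    finally show ?thesis .
  qed
  hence "w = - real n" using m1ne by simp
  hence "Ssum n = 4 * real n" using Re_WW[of n] unfolding w_def by simp
  thus False using Ssum_ne[OF assms(1)] by simp
qed

end
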